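(* Let $M\in\mathcal G$ and let $A\subseteq B\subseteq M$ be submodules. The following are equivalent: (a) $B$ is a strict subobject of $M$ and $A$ is a strict subobject of $B$; (b) $A$ is a strict subobject of $M$ and $B/A$ is a strict subobject of $M/A$; (c) $A$ and $B$ are both strict subobjects of $M$. (A quotient $B/A$ arising this way is called a strict subquotient of $M$.)
   Context: Let $\Lambda$ be a finite dimensional algebra over a field and $\mathrm{mod}\text-\Lambda$ the category of finitely generated right $\Lambda$-modules. Fix a torsion class $\mathcal G\subseteq\mathrm{mod}\text-\Lambda$, i.e. a class of modules closed under isomorphisms, extensions and quotients. For $B\in\mathcal G$, a subobject of $B$ is a submodule of $B$ that lies in $\mathcal G$. A subobject $A\subseteq B$ is a strict subobject if $A\cap B'\in\mathcal G$ for every subobject $B'$ of $B$. *)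

theory Defs
  imports Main
begin

definition fd_algebra :: "('k::field \<Rightarrow> 'a::ring_1) \<Rightarrow> bool" where
  "fd_algebra of_k \<longleftrightarrow>
     of_k 1 = 1 \<and>
     (\<forall>c d. of_k (c + d) = of_k c + of_k d) \<and>
     (\<forall>c d. of_k (c * d) = of_k c * of_k d) \<and>
     (\<forall>c x. of_k c * x = x * of_k c) \<and>
     (\<exists>S. finite S \<and> (\<forall>x. \<exists>c. x = (\<Sum>s\<in>S. of_k (c s) * s)))"

record ('a, 'v) rmod =
  mcarrier :: "'v set"
  madd :: "'v \<Rightarrow> 'v \<Rightarrow> 'v"
  mzero :: "'v"
  mact :: "'v \<Rightarrow> 'a \<Rightarrow> 'v"

definition rmodule :: "('a::ring_1, 'v) rmod \<Rightarrow> bool" where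
  "rmodule M \<longleftrightarrow>
     (let C = mcarrier M; p = madd M; z = mzero M; r = mact M in
       z \<in> C \<and>
       (\<forall>x\<in>C. \<forall>y\<in>C. p x y \<in> C) \<and>
       (\<forall>x\<in>C. \<forall>a. r x a \<in> C) \<and>
       (\<forall>x\<in>C. \<forall>y\<in>C. \<forall>w\<in>C. p (p x y) w = p x (p y w)) \<and>
       (\<forall>x\<in>C. \<forall>y\<in>C. p x y = p y x) \<and>
       (\<forall>x\<in>C. p z x = x) \<and>
       (\<forall>x\<in>C. \<exists>y\<in>C. p x y = z) \<and>
       (\<forall>x\<in>C. r x 1 = x) \<and>
       (\<forall>x\<in>C. \<forall>a b. r (r x a) b = r x (a * b)) \<and>
       (\<forall>x\<in>C. \<forall>y\<in>C. \<forall>a. r (p x y) a = p (r x a) (r y a)) \<and>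
       (\<forall>x\<in>C. \<forall>a b. r x (a + b) = p (r x a) (r x b)))"

definition sub_mod :: "('a::ring_1, 'v) rmod \<Rightarrow> 'v set \<Rightarrow> bool" where
  "sub_mod M S \<longleftrightarrow> rmodule M \<and> S \<subseteq> mcarrier M \<and> mzero M \<in> S \<and>
     (\<forall>x\<in>S. \<forall>y\<in>S. madd M x y \<in> S) \<and>
     (\<forall>x\<in>S. \<forall>a. mact M x a \<in> S) \<and>
     (\<forall>x\<in>S. \<exists>y\<in>S. madd M x y = mzero M)"

definition submod :: "('a, 'v) rmod \<Rightarrow> 'v set \<Rightarrow> ('a, 'v) rmod" where
  "submod M S = M\<lparr>mcarrier := S\<rparr>"

definition coset :: "('a, 'v) rmod \<Rightarrow> 'v set \<Rightarrow> 'v \<Rightarrow> 'v set" where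
  "coset M A x = {y \<in> mcarrier M. \<exists>a\<in>A. y = madd M x a}"

definition quot_mod :: "('a, 'v) rmod \<Rightarrow> 'v set \<Rightarrow> ('a, 'v set) rmod" where
  "quot_mod M A =
     \<lparr> mcarrier = coset M A ` mcarrier M,
       madd = (\<lambda>X Y. coset M A (madd M (SOME x. x \<in> X) (SOME y. y \<in> Y))),
       mzero = coset M A (mzero M),
       mact = (\<lambda>X a. coset M A (mact M (SOME x. x \<in> X) a)) \<rparr>"

definition hom_mod :: "('a, 'v) rmod \<Rightarrow> ('a, 'w) rmod \<Rightarrow> ('v \<Rightarrow> 'w) \<Rightarrow> bool" where
  "hom_mod M N f \<longleftrightarrow> f ` mcarrier M \<subseteq> mcarrier N \<and>
     (\<forall>x\<in>mcarrier M. \<forall>y\<in>mcarrier M. f (madd M x y) = madd N (f x) (f y)) \<and>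
     (\<forall>x\<in>mcarrier M. \<forall>a. f (mact M x a) = mact N (f x) a)"

definition iso_mod :: "('a, 'v) rmod \<Rightarrow> ('a, 'w) rmod \<Rightarrow> bool" where
  "iso_mod M N \<longleftrightarrow> (\<exists>f. hom_mod M N f \<and> bij_betw f (mcarrier M) (mcarrier N))"

definition fin_gen :: "('a::ring_1, 'v) rmod \<Rightarrow> bool" where
  "fin_gen M \<longleftrightarrow> (\<exists>S. finite S \<and> S \<subseteq> mcarrier M \<and>
     (\<forall>T. sub_mod M T \<and> S \<subseteq> T \<longrightarrow> T = mcarrier M))"

text \<open>A class of modules is represented by a predicate G on modules whose elements live in a
fixed universe type 'u.\<close>
definition inG :: "(('a::ring_1, 'u) rmod \<Rightarrow> bool) \<Rightarrow> ('a, 'w) rmod \<Rightarrow> bool" where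
  "inG G N \<longleftrightarrow> rmodule N \<and> (\<exists>N'. G N' \<and> iso_mod N N')"

definition short_exact ::
  "('a, 'v) rmod \<Rightarrow> ('a, 'v) rmod \<Rightarrow> ('a, 'v) rmod \<Rightarrow> ('v \<Rightarrow> 'v) \<Rightarrow> ('v \<Rightarrow> 'v) \<Rightarrow> bool" where
  "short_exact X Y Z f g \<longleftrightarrow> hom_mod X Y f \<and> inj_on f (mcarrier X) \<and>
     hom_mod Y Z g \<and> g ` mcarrier Y = mcarrier Z \<and>
     f ` mcarrier X = {y \<in> mcarrier Y. g y = mzero Z}"

definition torsion_class :: "(('a::ring_1, 'u) rmod \<Rightarrow> bool) \<Rightarrow> bool" where
  "torsion_class G \<longleftrightarrow>
     (\<forall>N. G N \<longrightarrow> rmodule N \<and> fin_gen N) \<and>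
     (\<forall>N N'. G N \<and> rmodule N' \<and> iso_mod N N' \<longrightarrow> G N') \<and>
     (\<forall>X Y Z f g. rmodule X \<and> rmodule Y \<and> rmodule Z \<and> short_exact X Y Z f g \<and> G X \<and> G Z
        \<longrightarrow> G Y) \<and>
     (\<forall>N K. G N \<and> sub_mod N K \<longrightarrow> inG G (quot_mod N K))"

definition subobj :: "(('a::ring_1, 'u) rmod \<Rightarrow> bool) \<Rightarrow> ('a, 'w) rmod \<Rightarrow> 'w set \<Rightarrow> bool" where
  "subobj G N S \<longleftrightarrow> sub_mod N S \<and> inG G (submod N S)"

definition strict_subobj ::
  "(('a::ring_1, 'u) rmod \<Rightarrow> bool) \<Rightarrow> ('a, 'w) rmod \<Rightarrow> 'w set \<Rightarrow> bool" where
  "strict_subobj G N S \<longleftrightarrow> subobj G N S \<and>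
     (\<forall>S'. subobj G N S' \<longrightarrow> inG G (submod N (S \<inter> S')))"

end

theory Submission
  imports Defs
begin


lemma rm_zero: "rmodule M \<Longrightarrow> mzero M \<in> mcarrier M"
  unfolding rmodule_def Let_def by (elim conjE) blast
lemma rm_add: "rmodule M \<Longrightarrow> x \<in> mcarrier M \<Longrightarrow> y \<in> mcarrier M \<Longrightarrow> madd M x y \<in> mcarrier M"
  unfolding rmodule_def Let_def by (elim conjE) blast
lemma rm_act: "rmodule M \<Longrightarrow> x \<in> mcarrier M \<Longrightarrow> mact M x a \<in> mcarrier M"
  unfolding rmodule_def Let_def by (elim conjE) blast
lemma rm_assoc: "rmodule M \<Longrightarrow> x \<in> mcarrier M \<Longrightarrow> y \<in> mcarrier M \<Longrightarrow> w \<in> mcarrier M \<Longrightarrow>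
   madd M (madd M x y) w = madd M x (madd M y w)"
  unfolding rmodule_def Let_def by (elim conjE) blast
lemma rm_comm: "rmodule M \<Longrightarrow> x \<in> mcarrier M \<Longrightarrow> y \<in> mcarrier M \<Longrightarrow> madd M x y = madd M y x"
  unfolding rmodule_def Let_def by (elim conjE) blast
lemma rm_zero_left: "rmodule M \<Longrightarrow> x \<in> mcarrier M \<Longrightarrow> madd M (mzero M) x = x"
  unfolding rmodule_def Let_def by (elim conjE) blast
lemma rm_inv: "rmodule M \<Longrightarrow> x \<in> mcarrier M \<Longrightarrow> \<exists>y\<in>mcarrier M. madd M x y = mzero M"
  unfolding rmodule_def Let_def by (elim conjE) blast
lemma rm_one: "rmodule M \<Longrightarrow> x \<in> mcarrier M \<Longrightarrow> mact M x 1 = x"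
  unfolding rmodule_def Let_def by (elim conjE) blast
lemma rm_act_act: "rmodule M \<Longrightarrow> x \<in> mcarrier M \<Longrightarrow> mact M (mact M x a) b = mact M x (a * b)"
  unfolding rmodule_def Let_def by (elim conjE) blast
lemma rm_act_add: "rmodule M \<Longrightarrow> x \<in> mcarrier M \<Longrightarrow> y \<in> mcarrier M \<Longrightarrow>
   mact M (madd M x y) a = madd M (mact M x a) (mact M y a)"
  unfolding rmodule_def Let_def by (elim conjE) blast
lemma rm_add_act: "rmodule M \<Longrightarrow> x \<in> mcarrier M \<Longrightarrow> mact M x (a + b) = madd M (mact M x a) (mact M x b)"
  by (simp add: rmodule_def Let_def)

lemma rm_zero_right: assumes M: "rmodule M" and x: "x \<in> mcarrier M" shows "madd M x (mzero M) = x"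
proof -
  have "madd M x (mzero M) = madd M (mzero M) x" by (rule rm_comm[OF M x rm_zero[OF M]])
  then show ?thesis using rm_zero_left[OF M x] by simp
qed

lemma rm_cancel:
  assumes M: "rmodule M" and x: "x \<in> mcarrier M" and y: "y \<in> mcarrier M" and z: "z \<in> mcarrier M"
    and e: "madd M x y = madd M x z"
  shows "y = z"
proof -
  obtain n where n: "n \<in> mcarrier M" "madd M x n = mzero M" using rm_inv[OF M x] by blast
  have nx: "madd M n x = mzero M" using n rm_comm[OF M x n(1)] by simp
  have "y = madd M (madd M n x) y" using nx rm_zero_left[OF M y] by simp
  also have "\<dots> = madd M n (madd M x z)" using rm_assoc[OF M n(1) x y] e by simp
  also have "\<dots> = madd M (madd M n x) z" using rm_assoc[OF M n(1) x z] by simp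
  also have "\<dots> = z" using nx rm_zero_left[OF M z] by simp
  finally show ?thesis .
qed

lemma rm_zero_unique: assumes M: "rmodule M" and x: "x \<in> mcarrier M" and e: "madd M x x = x"
  shows "x = mzero M"
  using rm_cancel[OF M x x rm_zero[OF M]] e rm_zero_right[OF M x] by simp

lemma rm_act_0: assumes M: "rmodule M" and x: "x \<in> mcarrier M" shows "mact M x 0 = mzero M"
proof -
  have "mact M x (0 + 0) = madd M (mact M x 0) (mact M x 0)" by (rule rm_add_act[OF M x])
  then show ?thesis using rm_zero_unique[OF M rm_act[OF M x]] by simp
qed

lemma rm_0_act: assumes M: "rmodule M" shows "mact M (mzero M) a = mzero M"
proof -
  have "mact M (madd M (mzero M) (mzero M)) a = madd M (mact M (mzero M) a) (mact M (mzero M) a)"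
    by (rule rm_act_add[OF M rm_zero[OF M] rm_zero[OF M]])
  then show ?thesis using rm_zero_unique[OF M rm_act[OF M rm_zero[OF M]]] rm_zero_left[OF M rm_zero[OF M]] by simp
qed

lemma rm_neg: assumes M: "rmodule M" and x: "x \<in> mcarrier M" shows "madd M x (mact M x (-1)) = mzero M"
proof -
  have "mact M x (1 + -1) = madd M (mact M x 1) (mact M x (-1))" by (rule rm_add_act[OF M x])
  then show ?thesis using rm_act_0[OF M x] rm_one[OF M x] by simp
qed

lemma rm_lcomm: assumes M: "rmodule M" and a: "a \<in> mcarrier M" and b: "b \<in> mcarrier M" and c: "c \<in> mcarrier M"
  shows "madd M a (madd M b c) = madd M b (madd M a c)"
proof -
  have "madd M a (madd M b c) = madd M (madd M a b) c" using rm_assoc[OF M a b c] by simp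
  also have "\<dots> = madd M (madd M b a) c" using rm_comm[OF M a b] by simp
  also have "\<dots> = madd M b (madd M a c)" using rm_assoc[OF M b a c] by simp
  finally show ?thesis .
qed

lemma rm_swap: assumes M: "rmodule M" and a: "a \<in> mcarrier M" and b: "b \<in> mcarrier M" and c: "c \<in> mcarrier M" and d: "d \<in> mcarrier M"
  shows "madd M (madd M a b) (madd M c d) = madd M (madd M a c) (madd M b d)"
proof -
  have "madd M (madd M a b) (madd M c d) = madd M a (madd M b (madd M c d))"
    using rm_assoc[OF M a b rm_add[OF M c d]] by simp
  also have "\<dots> = madd M a (madd M c (madd M b d))" using rm_lcomm[OF M b c d] by simp
  also have "\<dots> = madd M (madd M a c) (madd M b d)" using rm_assoc[OF M a c rm_add[OF M b d]] by simp
  finally show ?thesis .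
qed

lemma rm_back: assumes M: "rmodule M" and x: "x \<in> mcarrier M" and y: "y \<in> mcarrier M"
  shows "madd M y (madd M x (mact M y (-1))) = x"
  using rm_lcomm[OF M y x rm_act[OF M y]] rm_neg[OF M y] rm_zero_right[OF M x] by simp

lemma rm_back2: assumes M: "rmodule M" and x: "x \<in> mcarrier M" and y: "y \<in> mcarrier M"
  shows "madd M (madd M x y) (mact M y (-1)) = x"
  using rm_assoc[OF M x y rm_act[OF M y]] rm_neg[OF M y] rm_zero_right[OF M x] by simp

lemma hom_car: "hom_mod M N f \<Longrightarrow> x \<in> mcarrier M \<Longrightarrow> f x \<in> mcarrier N"
  by (auto simp: hom_mod_def)
lemma hom_add: "hom_mod M N f \<Longrightarrow> x \<in> mcarrier M \<Longrightarrow> y \<in> mcarrier M \<Longrightarrow> f (madd M x y) = madd N (f x) (f y)"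
  by (auto simp: hom_mod_def)
lemma hom_act: "hom_mod M N f \<Longrightarrow> x \<in> mcarrier M \<Longrightarrow> f (mact M x a) = mact N (f x) a"
  by (auto simp: hom_mod_def)

lemma hom_zero: assumes M: "rmodule M" and N: "rmodule N" and h: "hom_mod M N f" shows "f (mzero M) = mzero N"
proof -
  have "f (mact M (mzero M) 0) = mact N (f (mzero M)) 0" by (rule hom_act[OF h rm_zero[OF M]])
  then show ?thesis using rm_act_0[OF M rm_zero[OF M]] rm_act_0[OF N hom_car[OF h rm_zero[OF M]]] by simp
qed

lemma hom_comp: "hom_mod M N f \<Longrightarrow> hom_mod N P g \<Longrightarrow> hom_mod M P (g \<circ> f)"
  unfolding hom_mod_def by (auto simp: image_subset_iff)

lemma hom_inv:
  assumes M: "rmodule M" and h: "hom_mod M N f" and b: "bij_betw f (mcarrier M) (mcarrier N)"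
  shows "hom_mod N M (inv_into (mcarrier M) f)"
proof -
  have inj: "inj_on f (mcarrier M)" and s: "f ` mcarrier M = mcarrier N" using b by (auto simp: bij_betw_def)
  let ?g = "inv_into (mcarrier M) f"
  have gc: "\<And>x. x \<in> mcarrier N \<Longrightarrow> ?g x \<in> mcarrier M" using s by (metis inv_into_into)
  have fg: "\<And>x. x \<in> mcarrier N \<Longrightarrow> f (?g x) = x" using s by (metis f_inv_into_f)
  show ?thesis unfolding hom_mod_def
  proof (intro conjI ballI allI)
    show "?g ` mcarrier N \<subseteq> mcarrier M" using gc by auto
  next
    fix x y assume x: "x \<in> mcarrier N" and y: "y \<in> mcarrier N"
    have "f (madd M (?g x) (?g y)) = madd N x y" using hom_add[OF h gc[OF x] gc[OF y]] fg x y by simp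
    then show "?g (madd N x y) = madd M (?g x) (?g y)"
      using inv_into_f_f[OF inj rm_add[OF M gc[OF x] gc[OF y]]] by simp
  next
    fix x a assume x: "x \<in> mcarrier N"
    have "f (mact M (?g x) a) = mact N x a" using hom_act[OF h gc[OF x]] fg x by simp
    then show "?g (mact N x a) = mact M (?g x) a"
      using inv_into_f_f[OF inj rm_act[OF M gc[OF x], of a]] by simp
  qed
qed

lemma iso_sym: "rmodule M \<Longrightarrow> iso_mod M N \<Longrightarrow> iso_mod N M"
  unfolding iso_mod_def by (metis bij_betw_inv_into hom_inv)

lemma iso_trans: "iso_mod M N \<Longrightarrow> iso_mod N P \<Longrightarrow> iso_mod M P"
  unfolding iso_mod_def by (metis bij_betw_trans hom_comp)

lemma iso_refl: "iso_mod M M"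
  unfolding iso_mod_def hom_mod_def by (rule exI[of _ id]) auto



lemma submod_simps[simp]: "mcarrier (submod M S) = S" "madd (submod M S) = madd M"
  "mzero (submod M S) = mzero M" "mact (submod M S) = mact M"
  by (simp_all add: submod_def)

lemma submod_submod[simp]: "submod (submod M B) S = submod M S"
  by (simp add: submod_def)

lemma sub_modD: assumes "sub_mod M S"
  shows "rmodule M" "S \<subseteq> mcarrier M" "mzero M \<in> S"
    "\<And>x y. x \<in> S \<Longrightarrow> y \<in> S \<Longrightarrow> madd M x y \<in> S" "\<And>x a. x \<in> S \<Longrightarrow> mact M x a \<in> S"
  using assms unfolding sub_mod_def by blast+

lemma sub_mod_intro:
  assumes M: "rmodule M" and sub: "S \<subseteq> mcarrier M" and z: "mzero M \<in> S"
    and add: "\<And>x y. x \<in> S \<Longrightarrow> y \<in> S \<Longrightarrow> madd M x y \<in> S"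
    and act: "\<And>x a. x \<in> S \<Longrightarrow> mact M x a \<in> S"
  shows "sub_mod M S"
  unfolding sub_mod_def
proof (intro conjI ballI allI M sub z add act)
  fix x assume x: "x \<in> S"
  show "\<exists>y\<in>S. madd M x y = mzero M"
    using act[OF x, of "-1"] rm_neg[OF M] sub x by blast
qed

lemma sub_rmodule: assumes S: "sub_mod M S" shows "rmodule (submod M S)"
proof -
  note D = sub_modD[OF S]
  have M: "rmodule M" by (rule D(1))
  have c: "\<And>x. x \<in> S \<Longrightarrow> x \<in> mcarrier M" using D(2) by blast
  show ?thesis unfolding rmodule_def Let_def submod_simps
  proof (intro conjI ballI allI)
    show "mzero M \<in> S" by (rule D(3))
  next
    fix x y assume "x \<in> S" "y \<in> S" then show "madd M x y \<in> S" by (rule D(4))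
  next
    fix x a assume "x \<in> S" then show "mact M x a \<in> S" by (rule D(5))
  next
    fix x y w assume "x \<in> S" "y \<in> S" "w \<in> S"
    then show "madd M (madd M x y) w = madd M x (madd M y w)" using rm_assoc[OF M] c by blast
  next
    fix x y assume "x \<in> S" "y \<in> S"
    then show "madd M x y = madd M y x" using rm_comm[OF M] c by blast
  next
    fix x assume "x \<in> S" then show "madd M (mzero M) x = x" using rm_zero_left[OF M] c by blast
  next
    fix x assume "x \<in> S" then show "\<exists>y\<in>S. madd M x y = mzero M" using S unfolding sub_mod_def by blast
  next
    fix x assume "x \<in> S" then show "mact M x 1 = x" using rm_one[OF M] c by blast
  next
    fix x a b assume "x \<in> S" then show "mact M (mact M x a) b = mact M x (a * b)" using rm_act_act[OF M] c by blast
  next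
    fix x y a assume "x \<in> S" "y \<in> S"
    then show "mact M (madd M x y) a = madd M (mact M x a) (mact M y a)" using rm_act_add[OF M] c by blast
  next
    fix x a b assume "x \<in> S" then show "mact M x (a + b) = madd M (mact M x a) (mact M x b)"
      using rm_add_act[OF M] c by blast
  qed
qed

lemma sub_mod_submod: assumes B: "sub_mod M B"
  shows "sub_mod (submod M B) S \<longleftrightarrow> sub_mod M S \<and> S \<subseteq> B"
proof
  assume S: "sub_mod (submod M B) S"
  note D = sub_modD[OF S]
  have SB: "S \<subseteq> B" using D(2) by simp
  have "sub_mod M S"
  proof (rule sub_mod_intro[OF sub_modD(1)[OF B]])
    show "S \<subseteq> mcarrier M" using SB sub_modD(2)[OF B] by blast
    show "mzero M \<in> S" using D(3) by simp
    show "\<And>x y. x \<in> S \<Longrightarrow> y \<in> S \<Longrightarrow> madd M x y \<in> S" using D(4) by simp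
    show "\<And>x a. x \<in> S \<Longrightarrow> mact M x a \<in> S" using D(5) by simp
  qed
  then show "sub_mod M S \<and> S \<subseteq> B" using SB by blast
next
  assume a: "sub_mod M S \<and> S \<subseteq> B"
  note D = sub_modD[OF conjunct1[OF a]]
  show "sub_mod (submod M B) S"
  proof (rule sub_mod_intro[OF sub_rmodule[OF B]])
    show "S \<subseteq> mcarrier (submod M B)" using a by simp
    show "mzero (submod M B) \<in> S" using D(3) by simp
    show "\<And>x y. x \<in> S \<Longrightarrow> y \<in> S \<Longrightarrow> madd (submod M B) x y \<in> S" using D(4) by simp
    show "\<And>x a. x \<in> S \<Longrightarrow> mact (submod M B) x a \<in> S" using D(5) by simp
  qed
qed

lemma sub_mod_Int: assumes S: "sub_mod M S" and T: "sub_mod M T" shows "sub_mod M (S \<inter> T)"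
proof (rule sub_mod_intro[OF sub_modD(1)[OF S]])
  note DS = sub_modD[OF S] and DT = sub_modD[OF T]
  show "S \<inter> T \<subseteq> mcarrier M" using DS(2) by blast
  show "mzero M \<in> S \<inter> T" using DS(3) DT(3) by blast
  show "\<And>x y. x \<in> S \<inter> T \<Longrightarrow> y \<in> S \<inter> T \<Longrightarrow> madd M x y \<in> S \<inter> T" using DS(4) DT(4) by blast
  show "\<And>x a. x \<in> S \<inter> T \<Longrightarrow> mact M x a \<in> S \<inter> T" using DS(5) DT(5) by blast
qed

lemma sub_mod_image:
  assumes M: "rmodule M" and N: "rmodule N" and h: "hom_mod M N f" and S: "sub_mod M S"
  shows "sub_mod N (f ` S)"
proof (rule sub_mod_intro[OF N])
  note D = sub_modD[OF S]
  show "f ` S \<subseteq> mcarrier N" using D(2) hom_car[OF h] by blast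
  show "mzero N \<in> f ` S" using hom_zero[OF M N h] D(3) by force
  fix x y assume "x \<in> f ` S" "y \<in> f ` S"
  then obtain u v where uv: "u \<in> S" "v \<in> S" "x = f u" "y = f v" by blast
  have "madd N x y = f (madd M u v)" using hom_add[OF h subsetD[OF D(2) uv(1)] subsetD[OF D(2) uv(2)]] uv by simp
  then show "madd N x y \<in> f ` S" using D(4)[OF uv(1,2)] by simp
next
  note D = sub_modD[OF S]
  fix x a assume "x \<in> f ` S"
  then obtain u where u: "u \<in> S" "x = f u" by blast
  have "mact N x a = f (mact M u a)" using hom_act[OF h subsetD[OF D(2) u(1)], of a] u by simp
  then show "mact N x a \<in> f ` S" using D(5)[OF u(1)] by simp
qed

lemma sub_mod_preimage:
  assumes M: "rmodule M" and N: "rmodule N" and h: "hom_mod M N f" and T: "sub_mod N T"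
  shows "sub_mod M {x \<in> mcarrier M. f x \<in> T}"
proof (rule sub_mod_intro[OF M])
  note D = sub_modD[OF T]
  show "{x \<in> mcarrier M. f x \<in> T} \<subseteq> mcarrier M" by blast
  show "mzero M \<in> {x \<in> mcarrier M. f x \<in> T}" using hom_zero[OF M N h] rm_zero[OF M] D(3) by simp
  fix x y assume "x \<in> {x \<in> mcarrier M. f x \<in> T}" "y \<in> {x \<in> mcarrier M. f x \<in> T}"
  then show "madd M x y \<in> {x \<in> mcarrier M. f x \<in> T}" using hom_add[OF h] rm_add[OF M] D(4) by simp
next
  note D = sub_modD[OF T]
  fix x a assume "x \<in> {x \<in> mcarrier M. f x \<in> T}"
  then show "mact M x a \<in> {x \<in> mcarrier M. f x \<in> T}" using hom_act[OF h] rm_act[OF M] D(5) by simp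
qed

lemma sub_mod_zero: "rmodule N \<Longrightarrow> sub_mod N {mzero N}"
  using rm_zero[of N] rm_zero_left[of N] rm_0_act[of N] by (intro sub_mod_intro) auto

lemma sub_mod_kernel:
  assumes M: "rmodule M" and N: "rmodule N" and h: "hom_mod M N f"
  shows "sub_mod M {x \<in> mcarrier M. f x = mzero N}"
  using sub_mod_preimage[OF M N h sub_mod_zero[OF N]] by simp

lemma hom_restrict: "hom_mod M N f \<Longrightarrow> S \<subseteq> mcarrier M \<Longrightarrow> f ` S \<subseteq> T \<Longrightarrow> hom_mod (submod M S) (submod N T) f"
  unfolding hom_mod_def submod_simps by blast

lemma hom_restrict1: "hom_mod M N f \<Longrightarrow> S \<subseteq> mcarrier M \<Longrightarrow> hom_mod (submod M S) N f"
  unfolding hom_mod_def submod_simps by blast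

definition msum :: "('a, 'v) rmod \<Rightarrow> 'v set \<Rightarrow> 'v set \<Rightarrow> 'v set" where
  "msum M S T = {madd M s t | s t. s \<in> S \<and> t \<in> T}"

lemma sub_mod_msum:
  assumes S: "sub_mod M S" and T: "sub_mod M T"
  shows "sub_mod M (msum M S T)"
proof -
  note DS = sub_modD[OF S] and DT = sub_modD[OF T]
  have M: "rmodule M" by (rule DS(1))
  show ?thesis
  proof (rule sub_mod_intro[OF M])
    show "msum M S T \<subseteq> mcarrier M" unfolding msum_def using DS(2) DT(2) rm_add[OF M] by blast
    show "mzero M \<in> msum M S T" unfolding msum_def using DS(3) DT(3) rm_zero_left[OF M rm_zero[OF M]] by force
  next
    fix x y assume "x \<in> msum M S T" "y \<in> msum M S T"
    then obtain s t s' t' where st: "s \<in> S" "t \<in> T" "s' \<in> S" "t' \<in> T" "x = madd M s t" "y = madd M s' t'"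
      unfolding msum_def by blast
    have "madd M x y = madd M (madd M s s') (madd M t t')"
      using st rm_swap[OF M] DS(2) DT(2) by blast
    then show "madd M x y \<in> msum M S T" unfolding msum_def using st DS(4) DT(4) by blast
  next
    fix x a assume "x \<in> msum M S T"
    then obtain s t where st: "s \<in> S" "t \<in> T" "x = madd M s t" unfolding msum_def by blast
    have "mact M x a = madd M (mact M s a) (mact M t a)" using st rm_act_add[OF M] DS(2) DT(2) by blast
    then show "mact M x a \<in> msum M S T" unfolding msum_def using st DS(5) DT(5) by blast
  qed
qed

lemma rmodule_image:
  assumes M: "rmodule M" and s: "f ` mcarrier M = mcarrier N"
    and add: "\<And>x y. x \<in> mcarrier M \<Longrightarrow> y \<in> mcarrier M \<Longrightarrow> madd N (f x) (f y) = f (madd M x y)"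
    and act: "\<And>x a. x \<in> mcarrier M \<Longrightarrow> mact N (f x) a = f (mact M x a)"
    and z: "mzero N = f (mzero M)"
  shows "rmodule N"
  unfolding rmodule_def Let_def s[symmetric] ball_simps bex_simps z
proof (intro conjI ballI allI)
  fix x y w assume x: "x \<in> mcarrier M" and y: "y \<in> mcarrier M" and w: "w \<in> mcarrier M"
  show "madd N (madd N (f x) (f y)) (f w) = madd N (f x) (madd N (f y) (f w))"
    using x y w by (simp add: add rm_add[OF M] rm_assoc[OF M])
next
  fix x y assume x: "x \<in> mcarrier M" and y: "y \<in> mcarrier M"
  show "madd N (f x) (f y) = madd N (f y) (f x)" using x y by (simp add: add rm_comm[OF M x y])
next
  fix x assume x: "x \<in> mcarrier M"
  show "\<exists>y\<in>mcarrier M. madd N (f x) (f y) = f (mzero M)"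
    using x rm_neg[OF M x] rm_act[OF M x] add by metis
next
  fix x y a assume x: "x \<in> mcarrier M" and y: "y \<in> mcarrier M"
  show "mact N (madd N (f x) (f y)) a = madd N (mact N (f x) a) (mact N (f y) a)"
    using x y by (simp add: add act rm_add[OF M] rm_act[OF M] rm_act_add[OF M])
next
  show "f (mzero M) \<in> f ` mcarrier M" using rm_zero[OF M] by blast
next
  fix x y assume x: "x \<in> mcarrier M" and y: "y \<in> mcarrier M"
  show "madd N (f x) (f y) \<in> f ` mcarrier M" using add[OF x y] rm_add[OF M x y] by simp
next
  fix x a assume x: "x \<in> mcarrier M"
  show "mact N (f x) a \<in> f ` mcarrier M" using act[OF x] rm_act[OF M x] by simp
next
  fix x assume x: "x \<in> mcarrier M"
  show "madd N (f (mzero M)) (f x) = f x" using add[OF rm_zero[OF M] x] rm_zero_left[OF M x] by simp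
next
  fix x assume x: "x \<in> mcarrier M"
  show "mact N (f x) 1 = f x" using act[OF x] rm_one[OF M x] by simp
next
  fix x a b assume x: "x \<in> mcarrier M"
  show "mact N (mact N (f x) a) b = mact N (f x) (a * b)"
    using act[OF x] act[OF rm_act[OF M x]] rm_act_act[OF M x] by simp
next
  fix x a b assume x: "x \<in> mcarrier M"
  show "mact N (f x) (a + b) = madd N (mact N (f x) a) (mact N (f x) b)"
    using act[OF x] add[OF rm_act[OF M x] rm_act[OF M x]] rm_add_act[OF M x] by simp
qed



lemma coset_sub:
  assumes A: "sub_mod M A" and x: "x \<in> mcarrier M" and y: "y \<in> mcarrier M"
    and a: "a \<in> A" and e: "x = madd M y a"
  shows "coset M A x \<subseteq> coset M A y"
proof
  note D = sub_modD[OF A]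
  have M: "rmodule M" by (rule D(1))
  fix z assume "z \<in> coset M A x"
  then obtain b where b: "z \<in> mcarrier M" "b \<in> A" "z = madd M x b" unfolding coset_def by blast
  have "z = madd M y (madd M a b)" using b e rm_assoc[OF M y subsetD[OF D(2) a] subsetD[OF D(2) b(2)]] by simp
  then show "z \<in> coset M A y" unfolding coset_def using b(1) D(4)[OF a b(2)] by blast
qed

lemma coset_self: assumes A: "sub_mod M A" and x: "x \<in> mcarrier M" shows "x \<in> coset M A x"
  unfolding coset_def using x sub_modD(3)[OF A] rm_zero_right[OF sub_modD(1)[OF A] x] by force

lemma coset_eq:
  assumes A: "sub_mod M A" and x: "x \<in> mcarrier M" and y: "y \<in> mcarrier M"
  shows "coset M A x = coset M A y \<longleftrightarrow> (\<exists>a\<in>A. x = madd M y a)"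
proof
  assume "coset M A x = coset M A y"
  then have "x \<in> coset M A y" using coset_self[OF A x] by simp
  then show "\<exists>a\<in>A. x = madd M y a" unfolding coset_def by blast
next
  note D = sub_modD[OF A]
  have M: "rmodule M" by (rule D(1))
  assume "\<exists>a\<in>A. x = madd M y a"
  then obtain a where a: "a \<in> A" "x = madd M y a" by blast
  have ac: "a \<in> mcarrier M" using a D(2) by blast
  have "y = madd M x (mact M a (-1))" using a rm_back2[OF M y ac] by simp
  then have "coset M A y \<subseteq> coset M A x" using coset_sub[OF A y x D(5)[OF a(1)]] by blast
  moreover have "coset M A x \<subseteq> coset M A y" using coset_sub[OF A x y a] .
  ultimately show "coset M A x = coset M A y" by blast
qed

lemma some_coset:
  assumes A: "sub_mod M A" and x: "x \<in> mcarrier M"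
  shows "\<exists>a\<in>A. (SOME z. z \<in> coset M A x) = madd M x a"
proof -
  have "(SOME z. z \<in> coset M A x) \<in> coset M A x" using coset_self[OF A x] by (rule someI)
  then show ?thesis unfolding coset_def by blast
qed

lemma quot_simps[simp]: "mcarrier (quot_mod M A) = coset M A ` mcarrier M"
  "mzero (quot_mod M A) = coset M A (mzero M)"
  by (simp_all add: quot_mod_def)

lemma coset_add:
  assumes A: "sub_mod M A" and x: "x \<in> mcarrier M" and y: "y \<in> mcarrier M"
  shows "madd (quot_mod M A) (coset M A x) (coset M A y) = coset M A (madd M x y)"
proof -
  note D = sub_modD[OF A]
  have M: "rmodule M" by (rule D(1))
  obtain a where a: "a \<in> A" "(SOME z. z \<in> coset M A x) = madd M x a" using some_coset[OF A x] by blast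
  obtain b where b: "b \<in> A" "(SOME z. z \<in> coset M A y) = madd M y b" using some_coset[OF A y] by blast
  have ac: "a \<in> mcarrier M" and bc: "b \<in> mcarrier M" using a b D(2) by blast+
  have e: "madd M (madd M x a) (madd M y b) = madd M (madd M x y) (madd M a b)"
    by (rule rm_swap[OF M x ac y bc])
  have "coset M A (madd M (madd M x a) (madd M y b)) = coset M A (madd M x y)"
    using coset_eq[OF A rm_add[OF M rm_add[OF M x ac] rm_add[OF M y bc]] rm_add[OF M x y]] e D(4)[OF a(1) b(1)]
    by blast
  then show ?thesis unfolding quot_mod_def using a b by simp
qed

lemma coset_act:
  assumes A: "sub_mod M A" and x: "x \<in> mcarrier M"
  shows "mact (quot_mod M A) (coset M A x) r = coset M A (mact M x r)"
proof -
  note D = sub_modD[OF A]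
  have M: "rmodule M" by (rule D(1))
  obtain a where a: "a \<in> A" "(SOME z. z \<in> coset M A x) = madd M x a" using some_coset[OF A x] by blast
  have ac: "a \<in> mcarrier M" using a D(2) by blast
  have e: "mact M (madd M x a) r = madd M (mact M x r) (mact M a r)" by (rule rm_act_add[OF M x ac])
  have "coset M A (mact M (madd M x a) r) = coset M A (mact M x r)"
    using coset_eq[OF A rm_act[OF M rm_add[OF M x ac]] rm_act[OF M x]] e D(5)[OF a(1)] by blast
  then show ?thesis unfolding quot_mod_def using a by simp
qed

lemma coset_hom: assumes A: "sub_mod M A" shows "hom_mod M (quot_mod M A) (coset M A)"
  unfolding hom_mod_def using coset_add[OF A] coset_act[OF A] by auto

lemma quot_rmodule: assumes A: "sub_mod M A" shows "rmodule (quot_mod M A)"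
  by (rule rmodule_image[OF sub_modD(1)[OF A], of "coset M A"])
     (simp_all add: coset_add[OF A] coset_act[OF A])

lemma coset_zero_iff:
  assumes A: "sub_mod M A" and x: "x \<in> mcarrier M"
  shows "coset M A x = mzero (quot_mod M A) \<longleftrightarrow> x \<in> A"
proof -
  note D = sub_modD[OF A]
  have M: "rmodule M" by (rule D(1))
  have "coset M A x = coset M A (mzero M) \<longleftrightarrow> (\<exists>a\<in>A. x = madd M (mzero M) a)"
    by (rule coset_eq[OF A x rm_zero[OF M]])
  also have "\<dots> \<longleftrightarrow> x \<in> A"
  proof
    assume "\<exists>a\<in>A. x = madd M (mzero M) a"
    then obtain a where "a \<in> A" "x = madd M (mzero M) a" by blast
    then show "x \<in> A" using rm_zero_left[OF M subsetD[OF D(2)]] by simp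
  next
    assume "x \<in> A" then show "\<exists>a\<in>A. x = madd M (mzero M) a" using rm_zero_left[OF M x] by force
  qed
  finally show ?thesis by simp
qed

lemma tc_mod: "torsion_class G \<Longrightarrow> G N \<Longrightarrow> rmodule N"
  unfolding torsion_class_def by blast

lemma inG_G: assumes T: "torsion_class G" and N: "inG G (N :: ('a::ring_1, 'u) rmod)" shows "G N"
proof -
  obtain N' where N': "G N'" "iso_mod N N'" and R: "rmodule N" using N unfolding inG_def by blast
  have "iso_mod N' N" using iso_sym[OF R N'(2)] .
  then show ?thesis using T N'(1) R unfolding torsion_class_def by blast
qed

lemma G_inG: "torsion_class G \<Longrightarrow> G N \<Longrightarrow> inG G N"
  unfolding inG_def using tc_mod iso_refl by blast

lemma inG_rmodule: "inG G N \<Longrightarrow> rmodule N"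
  unfolding inG_def by blast

lemma inG_iso: "inG G N \<Longrightarrow> rmodule P \<Longrightarrow> iso_mod P N \<Longrightarrow> inG G P"
  unfolding inG_def using iso_trans by blast

lemma inG_quot: "torsion_class G \<Longrightarrow> G N \<Longrightarrow> sub_mod N K \<Longrightarrow> inG G (quot_mod N K)"
  unfolding torsion_class_def by blast

lemma inG_image:
  fixes G :: "('a::ring_1, 'u) rmod \<Rightarrow> bool"
  assumes T: "torsion_class G" and N: "inG G (N :: ('a::ring_1, 'u) rmod)" and P: "rmodule P"
    and h: "hom_mod N P h" and s: "h ` mcarrier N = mcarrier P"
  shows "inG G P"
proof -
  have GN: "G N" by (rule inG_G[OF T N])
  have RN: "rmodule N" by (rule inG_rmodule[OF N])
  define K where "K = {x \<in> mcarrier N. h x = mzero P}"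
  have K: "sub_mod N K" unfolding K_def by (rule sub_mod_kernel[OF RN P h])
  have Q: "inG G (quot_mod N K)" by (rule inG_quot[OF T GN K])
  define phi where "phi = (\<lambda>X. h (SOME x. x \<in> X))"
  have pc: "phi (coset N K x) = h x" if x: "x \<in> mcarrier N" for x
  proof -
    obtain k where k: "k \<in> K" "(SOME z. z \<in> coset N K x) = madd N x k" using some_coset[OF K x] by blast
    have kc: "k \<in> mcarrier N" "h k = mzero P" using k(1) unfolding K_def by auto
    have "phi (coset N K x) = madd P (h x) (h k)" unfolding phi_def using k hom_add[OF h x kc(1)] by simp
    also have "\<dots> = h x" using kc(2) rm_zero_right[OF P hom_car[OF h x]] by simp
    finally show ?thesis .
  qed
  have hp: "hom_mod (quot_mod N K) P phi"
    unfolding hom_mod_def quot_simps ball_simps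
  proof (intro conjI ballI allI)
    show "phi ` coset N K ` mcarrier N \<subseteq> mcarrier P" using pc hom_car[OF h] by auto
  next
    fix x y assume x: "x \<in> mcarrier N" and y: "y \<in> mcarrier N"
    show "phi (madd (quot_mod N K) (coset N K x) (coset N K y)) = madd P (phi (coset N K x)) (phi (coset N K y))"
      using coset_add[OF K x y] pc[OF rm_add[OF RN x y]] pc[OF x] pc[OF y] hom_add[OF h x y] by simp
  next
    fix x a assume x: "x \<in> mcarrier N"
    show "phi (mact (quot_mod N K) (coset N K x) a) = mact P (phi (coset N K x)) a"
      using coset_act[OF K x] pc[OF rm_act[OF RN x]] pc[OF x] hom_act[OF h x] by simp
  qed
  have inj: "inj_on phi (coset N K ` mcarrier N)"
  proof (rule inj_onI)
    fix X Y assume "X \<in> coset N K ` mcarrier N" "Y \<in> coset N K ` mcarrier N" and e: "phi X = phi Y"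
    then obtain x y where x: "x \<in> mcarrier N" "X = coset N K x" and y: "y \<in> mcarrier N" "Y = coset N K y" by blast
    have hxy: "h x = h y" using e x y pc by simp
    define a where "a = madd N x (mact N y (-1))"
    have ac: "a \<in> mcarrier N" unfolding a_def using rm_add[OF RN x(1) rm_act[OF RN y(1)]] .
    have "h a = madd P (h y) (mact P (h y) (-1))"
      unfolding a_def using hom_add[OF h x(1) rm_act[OF RN y(1)]] hom_act[OF h y(1)] hxy by simp
    also have "\<dots> = mzero P" by (rule rm_neg[OF P hom_car[OF h y(1)]])
    finally have aK: "a \<in> K" unfolding K_def using ac by simp
    have "x = madd N y a" unfolding a_def using rm_back[OF RN x(1) y(1)] by simp
    then show "X = Y" using coset_eq[OF K x(1) y(1)] aK x y by blast
  qed
  have img: "phi ` coset N K ` mcarrier N = mcarrier P"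
    using pc s by (simp add: image_image)
  have iso1: "iso_mod (quot_mod N K) P"
    unfolding iso_mod_def bij_betw_def using hp inj img by auto
  have iso2: "iso_mod P (quot_mod N K)" by (rule iso_sym[OF quot_rmodule[OF K] iso1])
  show ?thesis by (rule inG_iso[OF Q P iso2])
qed

lemma inG_ext:
  fixes G :: "('a::ring_1, 'u) rmod \<Rightarrow> bool"
  assumes T: "torsion_class G" and Y: "rmodule (Y :: ('a::ring_1, 'u) rmod)" and Z: "rmodule Z"
    and g: "hom_mod Y Z g" and s: "g ` mcarrier Y = mcarrier Z"
    and K: "inG G (submod Y {y \<in> mcarrier Y. g y = mzero Z})" and GZ: "inG G Z"
  shows "inG G Y"
proof -
  define Ks where "Ks = {y \<in> mcarrier Y. g y = mzero Z}"
  have Ksub: "sub_mod Y Ks" unfolding Ks_def by (rule sub_mod_kernel[OF Y Z g])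
  have GX: "G (submod Y Ks)" using inG_G[OF T] K unfolding Ks_def by blast
  obtain Z' psi where Z': "G Z'" "hom_mod Z Z' psi" "bij_betw psi (mcarrier Z) (mcarrier Z')"
    using GZ unfolding inG_def iso_mod_def by blast
  have RZ': "rmodule Z'" by (rule tc_mod[OF T Z'(1)])
  have injpsi: "inj_on psi (mcarrier Z)" and spsi: "psi ` mcarrier Z = mcarrier Z'"
    using Z'(3) by (auto simp: bij_betw_def)
  have se: "short_exact (submod Y Ks) Y Z' id (psi \<circ> g)"
    unfolding short_exact_def
  proof (intro conjI)
    show "hom_mod (submod Y Ks) Y id" unfolding hom_mod_def Ks_def by auto
    show "inj_on id (mcarrier (submod Y Ks))" by simp
    show "hom_mod Y Z' (psi \<circ> g)" by (rule hom_comp[OF g Z'(2)])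
    show "(psi \<circ> g) ` mcarrier Y = mcarrier Z'" using s spsi by (metis image_comp)
    have p0: "psi (mzero Z) = mzero Z'" by (rule hom_zero[OF Z RZ' Z'(2)])
    have "\<And>y. y \<in> mcarrier Y \<Longrightarrow> psi (g y) = mzero Z' \<longleftrightarrow> g y = mzero Z"
      using p0 injpsi hom_car[OF g] rm_zero[OF Z] by (metis inj_on_def)
    then show "id ` mcarrier (submod Y Ks) = {y \<in> mcarrier Y. (psi \<circ> g) y = mzero Z'}"
      unfolding Ks_def by auto
  qed
  have "G Y" using T unfolding torsion_class_def
    using sub_rmodule[OF Ksub] Y RZ' se GX Z'(1) by blast
  then show ?thesis by (rule G_inG[OF T])
qed



lemma P1:
  assumes B: "sub_mod M B" and A: "sub_mod M A" and AB: "A \<subseteq> B"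
    and sB: "strict_subobj G M B" and sA: "strict_subobj G (submod M B) A"
  shows "strict_subobj G M A"
proof -
  have inGA: "inG G (submod M A)" using sA unfolding strict_subobj_def subobj_def by simp
  show ?thesis unfolding strict_subobj_def subobj_def
  proof (intro conjI allI impI A inGA)
    fix S' assume S': "sub_mod M S' \<and> inG G (submod M S')"
    have i1: "inG G (submod M (B \<inter> S'))" using sB S' unfolding strict_subobj_def subobj_def by blast
    have s1: "sub_mod M (B \<inter> S')" using sub_mod_Int[OF B] S' by blast
    have "subobj G (submod M B) (B \<inter> S')" unfolding subobj_def
      using sub_mod_submod[OF B] s1 i1 by simp
    then have "inG G (submod (submod M B) (A \<inter> (B \<inter> S')))" using sA unfolding strict_subobj_def by blast
    moreover have "A \<inter> (B \<inter> S') = A \<inter> S'" using AB by blast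
    ultimately show "inG G (submod M (A \<inter> S'))" by simp
  qed
qed

lemma P2:
  assumes B: "sub_mod M B" and A: "sub_mod M A" and AB: "A \<subseteq> B"
    and sA: "strict_subobj G M A"
  shows "strict_subobj G (submod M B) A"
proof -
  have inGA: "inG G (submod M A)" using sA unfolding strict_subobj_def subobj_def by simp
  show ?thesis unfolding strict_subobj_def subobj_def
  proof (intro conjI allI impI)
    show "sub_mod (submod M B) A" using sub_mod_submod[OF B] A AB by simp
    show "inG G (submod (submod M B) A)" using inGA by simp
    fix S' assume S': "sub_mod (submod M B) S' \<and> inG G (submod (submod M B) S')"
    then have "subobj G M S'" unfolding subobj_def using sub_mod_submod[OF B] by simp
    then show "inG G (submod (submod M B) (A \<inter> S'))" using sA unfolding strict_subobj_def by simp
  qed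
qed

lemma img_inG:
  fixes G :: "('a::ring_1, 'u) rmod \<Rightarrow> bool" and M :: "('a, 'u) rmod"
  assumes T: "torsion_class G" and M: "rmodule M" and N: "rmodule N" and h: "hom_mod M N f"
    and S: "sub_mod M S" and iS: "inG G (submod M S)"
  shows "inG G (submod N (f ` S))"
proof (rule inG_image[OF T iS])
  show "rmodule (submod N (f ` S))" by (rule sub_rmodule[OF sub_mod_image[OF M N h S]])
  show "hom_mod (submod M S) (submod N (f ` S)) f" by (rule hom_restrict[OF h sub_modD(2)[OF S]]) simp
  show "f ` mcarrier (submod M S) = mcarrier (submod N (f ` S))" by simp
qed

lemma ext2:
  fixes G :: "('a::ring_1, 'u) rmod \<Rightarrow> bool" and M :: "('a, 'u) rmod"
  assumes T: "torsion_class G" and A: "sub_mod M A" and S: "sub_mod M S"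
    and iAS: "inG G (submod M (A \<inter> S))" and iQ: "inG G (submod (quot_mod M A) (coset M A ` S))"
  shows "inG G (submod M S)"
proof -
  have M: "rmodule M" by (rule sub_modD(1)[OF A])
  have Q: "rmodule (quot_mod M A)" by (rule quot_rmodule[OF A])
  have h: "hom_mod M (quot_mod M A) (coset M A)" by (rule coset_hom[OF A])
  have Sc: "S \<subseteq> mcarrier M" by (rule sub_modD(2)[OF S])
  have ker: "{y \<in> mcarrier (submod M S). coset M A y = mzero (submod (quot_mod M A) (coset M A ` S))} = A \<inter> S"
    using coset_zero_iff[OF A] Sc by auto
  show ?thesis
  proof (rule inG_ext[OF T sub_rmodule[OF S] sub_rmodule[OF sub_mod_image[OF M Q h S]]])
    show "hom_mod (submod M S) (submod (quot_mod M A) (coset M A ` S)) (coset M A)"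
      by (rule hom_restrict[OF h Sc]) simp
    show "coset M A ` mcarrier (submod M S) = mcarrier (submod (quot_mod M A) (coset M A ` S))" by simp
    show "inG G (submod (submod M S) {y \<in> mcarrier (submod M S). coset M A y = mzero (submod (quot_mod M A) (coset M A ` S))})"
      unfolding ker using iAS by simp
  qed (rule iQ)
qed

lemma P3:
  fixes G :: "('a::ring_1, 'u) rmod \<Rightarrow> bool" and M :: "('a, 'u) rmod"
  assumes T: "torsion_class G" and B: "sub_mod M B" and A: "sub_mod M A" and AB: "A \<subseteq> B"
    and sA: "strict_subobj G M A" and sB: "strict_subobj G M B"
  shows "strict_subobj G (quot_mod M A) (coset M A ` B)"
proof -
  have M: "rmodule M" by (rule sub_modD(1)[OF A])
  have Q: "rmodule (quot_mod M A)" by (rule quot_rmodule[OF A])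
  have h: "hom_mod M (quot_mod M A) (coset M A)" by (rule coset_hom[OF A])
  have inGA: "inG G (submod M A)" using sA unfolding strict_subobj_def subobj_def by simp
  have inGB: "inG G (submod M B)" using sB unfolding strict_subobj_def subobj_def by simp
  show ?thesis unfolding strict_subobj_def subobj_def
  proof (intro conjI allI impI)
    show "sub_mod (quot_mod M A) (coset M A ` B)" by (rule sub_mod_image[OF M Q h B])
    show "inG G (submod (quot_mod M A) (coset M A ` B))" by (rule img_inG[OF T M Q h B inGB])
    fix S' assume S': "sub_mod (quot_mod M A) S' \<and> inG G (submod (quot_mod M A) S')"
    define D where "D = {x \<in> mcarrier M. coset M A x \<in> S'}"
    have Dsub: "sub_mod M D" unfolding D_def by (rule sub_mod_preimage[OF M Q h]) (use S' in blast)
    have Dc: "D \<subseteq> mcarrier M" unfolding D_def by blast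
    have AD: "A \<subseteq> D"
    proof
      fix a assume a: "a \<in> A"
      have ac: "a \<in> mcarrier M" using a sub_modD(2)[OF A] by blast
      have "coset M A a = mzero (quot_mod M A)" using coset_zero_iff[OF A ac] a by simp
      then show "a \<in> D" unfolding D_def using ac sub_modD(3)[of "quot_mod M A" S'] S' by simp
    qed
    have imD: "coset M A ` D = S'"
    proof
      show "coset M A ` D \<subseteq> S'" unfolding D_def by blast
      show "S' \<subseteq> coset M A ` D"
      proof
        fix s assume s: "s \<in> S'"
        then have "s \<in> coset M A ` mcarrier M" using sub_modD(2)[of "quot_mod M A" S'] S' by auto
        then obtain x where "x \<in> mcarrier M" "s = coset M A x" by blast
        then show "s \<in> coset M A ` D" unfolding D_def using s by blast
      qed
    qed
    have iD: "inG G (submod M D)"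
    proof (rule inG_ext[OF T sub_rmodule[OF Dsub] sub_rmodule[of "quot_mod M A" S']])
      show "sub_mod (quot_mod M A) S'" using S' by blast
      show "hom_mod (submod M D) (submod (quot_mod M A) S') (coset M A)"
        by (rule hom_restrict[OF h Dc]) (use imD in simp)
      show "coset M A ` mcarrier (submod M D) = mcarrier (submod (quot_mod M A) S')" using imD by simp
      have ker: "{y \<in> mcarrier (submod M D). coset M A y = mzero (submod (quot_mod M A) S')} = A"
        using coset_zero_iff[OF A] Dc AD by auto
      show "inG G (submod (submod M D) {y \<in> mcarrier (submod M D). coset M A y = mzero (submod (quot_mod M A) S')})"
        unfolding ker using inGA by simp
      show "inG G (submod (quot_mod M A) S')" using S' by blast
    qed
    have iBD: "inG G (submod M (B \<inter> D))" using sB Dsub iD unfolding strict_subobj_def subobj_def by blast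
    have eq: "coset M A ` B \<inter> S' = coset M A ` (B \<inter> D)"
    proof
      show "coset M A ` B \<inter> S' \<subseteq> coset M A ` (B \<inter> D)"
        unfolding D_def using sub_modD(2)[OF B] by blast
      show "coset M A ` (B \<inter> D) \<subseteq> coset M A ` B \<inter> S'" unfolding D_def by blast
    qed
    show "inG G (submod (quot_mod M A) (coset M A ` B \<inter> S'))"
      unfolding eq by (rule img_inG[OF T M Q h sub_mod_Int[OF B Dsub] iBD])
  qed
qed

lemma P4:
  fixes G :: "('a::ring_1, 'u) rmod \<Rightarrow> bool" and M :: "('a, 'u) rmod"
  assumes T: "torsion_class G" and B: "sub_mod M B" and A: "sub_mod M A" and AB: "A \<subseteq> B"
    and sA: "strict_subobj G M A" and sQ: "strict_subobj G (quot_mod M A) (coset M A ` B)"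
  shows "strict_subobj G M B"
proof -
  have M: "rmodule M" by (rule sub_modD(1)[OF A])
  have Q: "rmodule (quot_mod M A)" by (rule quot_rmodule[OF A])
  have h: "hom_mod M (quot_mod M A) (coset M A)" by (rule coset_hom[OF A])
  have Ac: "A \<subseteq> mcarrier M" by (rule sub_modD(2)[OF A])
  have Bc: "B \<subseteq> mcarrier M" by (rule sub_modD(2)[OF B])
  have inGA: "inG G (submod M A)" using sA unfolding strict_subobj_def subobj_def by simp
  have inGQB: "inG G (submod (quot_mod M A) (coset M A ` B))" using sQ unfolding strict_subobj_def subobj_def by simp
  have inGB: "inG G (submod M B)"
    by (rule ext2[OF T A B _ inGQB]) (use inGA AB in \<open>simp add: Int_absorb2\<close>)
  show ?thesis unfolding strict_subobj_def subobj_def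
  proof (intro conjI allI impI B inGB)
    fix S' assume S': "sub_mod M S' \<and> inG G (submod M S')"
    have S's: "sub_mod M S'" and iS': "inG G (submod M S')" using S' by auto
    have S'c: "S' \<subseteq> mcarrier M" by (rule sub_modD(2)[OF S's])
    define T' where "T' = msum M S' A"
    have T's: "sub_mod M T'" unfolding T'_def by (rule sub_mod_msum[OF S's A])
    have T'c: "T' \<subseteq> mcarrier M" by (rule sub_modD(2)[OF T's])
    have ST: "S' \<subseteq> T'"
    proof
      fix s assume s: "s \<in> S'"
      have "s = madd M s (mzero M)" using rm_zero_right[OF M] s S'c by auto
      then show "s \<in> T'" unfolding T'_def msum_def using s sub_modD(3)[OF A] by blast
    qed
    have AT: "A \<subseteq> T'"
    proof
      fix a assume a: "a \<in> A"
      have "a = madd M (mzero M) a" using rm_zero_left[OF M] a Ac by auto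
      then show "a \<in> T'" unfolding T'_def msum_def using a sub_modD(3)[OF S's] by blast
    qed
    have Q': "rmodule (quot_mod M S')" by (rule quot_rmodule[OF S's])
    have h': "hom_mod M (quot_mod M S') (coset M S')" by (rule coset_hom[OF S's])
    have imT': "coset M S' ` T' = coset M S' ` A"
    proof
      show "coset M S' ` A \<subseteq> coset M S' ` T'" using AT by blast
      show "coset M S' ` T' \<subseteq> coset M S' ` A"
      proof
        fix X assume "X \<in> coset M S' ` T'"
        then obtain s a where sa: "s \<in> S'" "a \<in> A" "X = coset M S' (madd M s a)"
          unfolding T'_def msum_def by blast
        have sc: "s \<in> mcarrier M" and ac: "a \<in> mcarrier M" using sa S'c Ac by auto
        have "madd M s a = madd M a s" by (rule rm_comm[OF M sc ac])
        then have "coset M S' (madd M s a) = coset M S' a"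
          using coset_eq[OF S's rm_add[OF M sc ac] ac] sa(1) by blast
        then show "X \<in> coset M S' ` A" using sa by blast
      qed
    qed
    have iZ: "inG G (submod (quot_mod M S') (coset M S' ` A))" by (rule img_inG[OF T M Q' h' A inGA])
    have iT': "inG G (submod M T')"
    proof (rule inG_ext[OF T sub_rmodule[OF T's] sub_rmodule[OF sub_mod_image[OF M Q' h' A]]])
      show "hom_mod (submod M T') (submod (quot_mod M S') (coset M S' ` A)) (coset M S')"
        by (rule hom_restrict[OF h' T'c]) (use imT' in simp)
      show "coset M S' ` mcarrier (submod M T') = mcarrier (submod (quot_mod M S') (coset M S' ` A))"
        using imT' by simp
      have ker: "{y \<in> mcarrier (submod M T'). coset M S' y = mzero (submod (quot_mod M S') (coset M S' ` A))} = S'"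
        using coset_zero_iff[OF S's] T'c ST by auto
      show "inG G (submod (submod M T') {y \<in> mcarrier (submod M T'). coset M S' y = mzero (submod (quot_mod M S') (coset M S' ` A))})"
        unfolding ker using iS' by simp
    qed (rule iZ)
    have subQ: "subobj G (quot_mod M A) (coset M A ` T')"
      unfolding subobj_def using sub_mod_image[OF M Q h T's] img_inG[OF T M Q h T's iT'] by blast
    have i1: "inG G (submod (quot_mod M A) (coset M A ` B \<inter> coset M A ` T'))"
      using sQ subQ unfolding strict_subobj_def by blast
    have eq: "coset M A ` B \<inter> coset M A ` T' = coset M A ` (B \<inter> S')"
    proof
      show "coset M A ` (B \<inter> S') \<subseteq> coset M A ` B \<inter> coset M A ` T'" using ST by blast
      show "coset M A ` B \<inter> coset M A ` T' \<subseteq> coset M A ` (B \<inter> S')"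
      proof
        fix X assume X: "X \<in> coset M A ` B \<inter> coset M A ` T'"
        then obtain b t where bt: "b \<in> B" "t \<in> T'" "X = coset M A b" "X = coset M A t" by blast
        then obtain s a where sa: "s \<in> S'" "a \<in> A" "t = madd M s a" unfolding T'_def msum_def by blast
        have sc: "s \<in> mcarrier M" and ac: "a \<in> mcarrier M" and bc: "b \<in> mcarrier M"
          using sa S'c Ac bt Bc by auto
        have "coset M A t = coset M A s" using coset_eq[OF A rm_add[OF M sc ac] sc] sa by blast
        then have "coset M A s = coset M A b" using bt by simp
        then obtain a2 where a2: "a2 \<in> A" "s = madd M b a2" using coset_eq[OF A sc bc] by blast
        have "s \<in> B" using a2 sub_modD(4)[OF B bt(1)] AB by blast
        then show "X \<in> coset M A ` (B \<inter> S')"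
          using sa(1) bt(3) \<open>coset M A s = coset M A b\<close> by (metis IntI image_eqI)
      qed
    qed
    have iAS: "inG G (submod M (A \<inter> (B \<inter> S')))"
    proof -
      have "inG G (submod M (A \<inter> S'))" using sA S' unfolding strict_subobj_def subobj_def by blast
      moreover have "A \<inter> (B \<inter> S') = A \<inter> S'" using AB by blast
      ultimately show ?thesis by simp
    qed
    show "inG G (submod M (B \<inter> S'))"
      by (rule ext2[OF T A sub_mod_Int[OF B S's] iAS]) (use i1 eq in simp)
  qed
qed


theorem mainTheorem5:
  fixes of_k :: "'k::field \<Rightarrow> 'a::ring_1"
    and G :: "('a, 'u) rmod \<Rightarrow> bool"
    and M :: "('a, 'u) rmod"
    and A B :: "'u set"
  assumes "fd_algebra of_k"
    and "torsion_class G"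
    and "G M"
    and "sub_mod M A" and "sub_mod M B" and "A \<subseteq> B"
  shows "((strict_subobj G M B \<and> strict_subobj G (submod M B) A)
            \<longleftrightarrow> (strict_subobj G M A \<and> strict_subobj G (quot_mod M A) (coset M A ` B)))
       \<and> ((strict_subobj G M A \<and> strict_subobj G (quot_mod M A) (coset M A ` B))
            \<longleftrightarrow> (strict_subobj G M A \<and> strict_subobj G M B))"
proof -
  have T: "torsion_class G" and A: "sub_mod M A" and B: "sub_mod M B" and AB: "A \<subseteq> B"
    using assms by auto
  have ac: "strict_subobj G M B \<and> strict_subobj G (submod M B) A \<Longrightarrow> strict_subobj G M A \<and> strict_subobj G M B"
    using P1[OF B A AB] by blast
  have ca: "strict_subobj G M A \<and> strict_subobj G M B \<Longrightarrow> strict_subobj G M B \<and> strict_subobj G (submod M B) A"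
    using P2[OF B A AB] by blast
  have cb: "strict_subobj G M A \<and> strict_subobj G M B \<Longrightarrow> strict_subobj G M A \<and> strict_subobj G (quot_mod M A) (coset M A ` B)"
    using P3[OF T B A AB] by blast
  have bc: "strict_subobj G M A \<and> strict_subobj G (quot_mod M A) (coset M A ` B) \<Longrightarrow> strict_subobj G M A \<and> strict_subobj G M B"
    using P4[OF T B A AB] by blast
  show ?thesis using ac ca cb bc by blast
qed

end
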